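(* Let $T$ be a tree. The faces of $\Delta_T$ having distributable capacity form a subcomplex of $\Delta_T$. Moreover, if $T'$ is a tree with vertex capacities having distributable capacity and $C$ is the vertex obtained by merging two neighboring vertices $C_1,C_2$ of $T'$ (with capacity $\mathrm{cap}(C_1)+\mathrm{cap}(C_2)$), then $\mathrm{cap}(C)\ge\deg(C)$.
   Context: For a tree $T$ on vertex set $[n]$, the Coxeter-like complex $\Delta_T$ has as faces: a set $E^C(F)$ of edges of $T$ to delete together with an assignment to each component $C$ of the resulting forest of exactly $|C|$ labels from $[n]$, each label used exactly once; $\sigma\subseteq\tau$ iff $\sigma$ is obtained from $\tau$ by merging neighboring components. For a tree with vertex capacities and an edge subset $E$, the associated tree has as vertices the components of the forest obtained by deleting $E$, as edges the edges of $E$, and capacity of a component equal to the sum of its vertex capacities. A tree with capacities has distributable capacity if $\mathrm{cap}(v)\ge\deg(v)-1$ for every vertex $v$. A face $F$ of $\Delta_T$ has distributable capacity if the tree associated to $(T,E^C(F))$, with all vertices of $T$ having capacity $1$, has distributable capacity. *)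

theory Defs
  imports Main
begin

definition is_tree :: "'a set \<Rightarrow> 'a set set \<Rightarrow> bool" where
  "is_tree V E \<longleftrightarrow> finite V \<and> V \<noteq> {}
     \<and> (\<forall>e\<in>E. \<exists>u v. e = {u, v} \<and> u \<in> V \<and> v \<in> V \<and> u \<noteq> v)
     \<and> (\<forall>u\<in>V. \<forall>v\<in>V. (\<lambda>x y. {x, y} \<in> E)\<^sup>*\<^sup>* u v)
     \<and> card E + 1 = card V"

definition deg :: "'a set set \<Rightarrow> 'a \<Rightarrow> nat" where
  "deg E v = card {e \<in> E. v \<in> e}"

definition distributable :: "'a set \<Rightarrow> 'a set set \<Rightarrow> ('a \<Rightarrow> nat) \<Rightarrow> bool" where
  "distributable V E cap \<longleftrightarrow> (\<forall>v\<in>V. int (cap v) \<ge> int (deg E v) - 1)"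

definition comp :: "'a set \<Rightarrow> 'a set set \<Rightarrow> 'a set set \<Rightarrow> 'a \<Rightarrow> 'a set" where
  "comp V E F v = {w \<in> V. (\<lambda>x y. {x, y} \<in> E - F)\<^sup>*\<^sup>* v w}"

definition components :: "'a set \<Rightarrow> 'a set set \<Rightarrow> 'a set set \<Rightarrow> 'a set set" where
  "components V E F = comp V E F ` V"

definition assoc_edges :: "'a set \<Rightarrow> 'a set set \<Rightarrow> 'a set set \<Rightarrow> 'a set set set" where
  "assoc_edges V E F = {{comp V E F u, comp V E F v} | u v. {u, v} \<in> F}"

definition assoc_cap :: "('a \<Rightarrow> nat) \<Rightarrow> 'a set \<Rightarrow> nat" where
  "assoc_cap cap C = sum cap C"

text \<open>Faces of the Coxeter-like complex Delta_T for a tree T on [n] = {1..n} with edges E: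
  a pair (F, lab) of a set F of deleted edges and a labelling of the components.\<close>
definition is_face :: "nat \<Rightarrow> nat set set \<Rightarrow> nat set set \<times> (nat set \<Rightarrow> nat set) \<Rightarrow> bool" where
  "is_face n E \<phi> \<longleftrightarrow> (case \<phi> of (F, lab) \<Rightarrow>
     F \<subseteq> E
     \<and> (\<forall>C\<in>components {1..n} E F. lab C \<subseteq> {1..n} \<and> card (lab C) = card C)
     \<and> (\<forall>C\<in>components {1..n} E F. \<forall>D\<in>components {1..n} E F. C \<noteq> D \<longrightarrow> lab C \<inter> lab D = {})
     \<and> \<Union> (lab ` components {1..n} E F) = {1..n})"

text \<open>sigma \<subseteq> tau: sigma arises from tau by merging neighbouring components.\<close>
definition face_le :: "nat \<Rightarrow> nat set set \<Rightarrow> nat set set \<times> (nat set \<Rightarrow> nat set)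
    \<Rightarrow> nat set set \<times> (nat set \<Rightarrow> nat set) \<Rightarrow> bool" where
  "face_le n E \<sigma> \<tau> \<longleftrightarrow> (case \<sigma> of (F', lab') \<Rightarrow> case \<tau> of (F, lab) \<Rightarrow>
     F' \<subseteq> F \<and> (\<forall>C\<in>components {1..n} E F'.
        lab' C = \<Union> {lab D | D. D \<in> components {1..n} E F \<and> D \<subseteq> C}))"

definition face_distributable :: "nat \<Rightarrow> nat set set \<Rightarrow> nat set set \<times> (nat set \<Rightarrow> nat set) \<Rightarrow> bool" where
  "face_distributable n E \<phi> \<longleftrightarrow>
     distributable (components {1..n} E (fst \<phi>)) (assoc_edges {1..n} E (fst \<phi>)) (assoc_cap (\<lambda>_. 1))"

end

theory Submission imports Defs begin

lemma rtc_sym_edge: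
  assumes "(\<lambda>x y. {x, y} \<in> S)\<^sup>*\<^sup>* x y" shows "(\<lambda>x y. {x, y} \<in> S)\<^sup>*\<^sup>* y x"
  using assms
proof (induction rule: rtranclp_induct)
  case base then show ?case by simp
next
  case (step y z)
  have "{z, y} \<in> S" using step(2) by (simp add: insert_commute)
  then show ?case using step(3) by (meson converse_rtranclp_into_rtranclp)
qed

lemma rtc_add:
  fixes S :: "'a set set"
  defines "R \<equiv> (\<lambda>x y. {x, y} \<in> S)"
  shows "(\<lambda>x y. {x, y} \<in> S \<union> {{a,b}})\<^sup>*\<^sup>* x y \<longleftrightarrow>
     R\<^sup>*\<^sup>* x y \<or> (R\<^sup>*\<^sup>* x a \<and> R\<^sup>*\<^sup>* b y) \<or> (R\<^sup>*\<^sup>* x b \<and> R\<^sup>*\<^sup>* a y)"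
proof
  have sym: "\<And>x y. R\<^sup>*\<^sup>* x y \<Longrightarrow> R\<^sup>*\<^sup>* y x" unfolding R_def by (rule rtc_sym_edge)
  assume "(\<lambda>x y. {x, y} \<in> S \<union> {{a,b}})\<^sup>*\<^sup>* x y"
  then show "R\<^sup>*\<^sup>* x y \<or> (R\<^sup>*\<^sup>* x a \<and> R\<^sup>*\<^sup>* b y) \<or> (R\<^sup>*\<^sup>* x b \<and> R\<^sup>*\<^sup>* a y)"
  proof (induction rule: rtranclp_induct)
    case base then show ?case by simp
  next
    case (step y z)
    from step(2) have "R y z \<or> (y = a \<and> z = b) \<or> (y = b \<and> z = a)"
      unfolding R_def by (auto simp: doubleton_eq_iff)
    then show ?case
    proof (elim disjE conjE)
      assume "R y z" then show ?case using step(3) by (meson rtranclp.rtrancl_into_rtrancl)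
    next
      assume "y = a" "z = b" then show ?case using step(3) by auto
    next
      assume "y = b" "z = a" then show ?case using step(3) by auto
    qed
  qed
next
  have mono: "\<And>x y. R\<^sup>*\<^sup>* x y \<Longrightarrow> (\<lambda>x y. {x, y} \<in> S \<union> {{a,b}})\<^sup>*\<^sup>* x y"
    unfolding R_def by (erule rtranclp_mono[THEN predicate2D, rotated]) auto
  have ab: "(\<lambda>x y. {x, y} \<in> S \<union> {{a,b}})\<^sup>*\<^sup>* a b" "(\<lambda>x y. {x, y} \<in> S \<union> {{a,b}})\<^sup>*\<^sup>* b a"
    by (auto intro!: r_into_rtranclp simp: insert_commute)
  assume "R\<^sup>*\<^sup>* x y \<or> (R\<^sup>*\<^sup>* x a \<and> R\<^sup>*\<^sup>* b y) \<or> (R\<^sup>*\<^sup>* x b \<and> R\<^sup>*\<^sup>* a y)"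
  then show "(\<lambda>x y. {x, y} \<in> S \<union> {{a,b}})\<^sup>*\<^sup>* x y"
  proof (elim disjE conjE)
    assume "R\<^sup>*\<^sup>* x y" then show ?thesis by (rule mono)
  next
    assume "R\<^sup>*\<^sup>* x a" "R\<^sup>*\<^sup>* b y"
    then show ?thesis using rtranclp_trans[OF rtranclp_trans[OF mono ab(1)] mono] by blast
  next
    assume "R\<^sup>*\<^sup>* x b" "R\<^sup>*\<^sup>* a y"
    then show ?thesis using rtranclp_trans[OF rtranclp_trans[OF mono ab(2)] mono] by blast
  qed
qed

locale TV =
  fixes V :: "'a set" and E :: "'a set set"
  assumes finV: "finite V" and EV: "\<forall>e\<in>E. \<exists>u v. e = {u, v} \<and> u \<in> V \<and> v \<in> V"
begin

lemma comp_refl: "v \<in> V \<Longrightarrow> v \<in> comp V E F v"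
  by (simp add: comp_def)

lemma comp_sub: "comp V E F v \<subseteq> V" by (auto simp: comp_def)

lemma comp_mem: "w \<in> comp V E F v \<longleftrightarrow> w \<in> V \<and> (\<lambda>x y. {x, y} \<in> E - F)\<^sup>*\<^sup>* v w"
  unfolding comp_def by (rule mem_Collect_eq)

lemma comp_eq_iff: "comp V E F u = comp V E F v \<longleftrightarrow> (\<lambda>x y. {x, y} \<in> E - F)\<^sup>*\<^sup>* u v"
  if "u \<in> V" "v \<in> V"
proof
  assume "comp V E F u = comp V E F v"
  then have "u \<in> comp V E F v" using comp_refl[OF that(1), of F] by simp
  then have "(\<lambda>x y. {x, y} \<in> E - F)\<^sup>*\<^sup>* v u" unfolding comp_mem by (rule conjunct2)
  then show "(\<lambda>x y. {x, y} \<in> E - F)\<^sup>*\<^sup>* u v" by (rule rtc_sym_edge)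
next
  assume h: "(\<lambda>x y. {x, y} \<in> E - F)\<^sup>*\<^sup>* u v"
  then have h2: "(\<lambda>x y. {x, y} \<in> E - F)\<^sup>*\<^sup>* v u" by (rule rtc_sym_edge)
  show "comp V E F u = comp V E F v"
  proof (rule set_eqI)
    fix w
    show "w \<in> comp V E F u \<longleftrightarrow> w \<in> comp V E F v"
      unfolding comp_mem using rtranclp_trans[OF h, of w] rtranclp_trans[OF h2, of w] by blast
  qed
qed

lemma comp_disj: "u \<in> V \<Longrightarrow> v \<in> V \<Longrightarrow> comp V E F u \<inter> comp V E F v \<noteq> {} \<Longrightarrow> comp V E F u = comp V E F v"
proof -
  assume uv: "u \<in> V" "v \<in> V" "comp V E F u \<inter> comp V E F v \<noteq> {}"
  then obtain w where "w \<in> comp V E F u" "w \<in> comp V E F v" by blast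
  then have "(\<lambda>x y. {x, y} \<in> E - F)\<^sup>*\<^sup>* u w" "(\<lambda>x y. {x, y} \<in> E - F)\<^sup>*\<^sup>* v w" unfolding comp_mem by blast+
  then have "(\<lambda>x y. {x, y} \<in> E - F)\<^sup>*\<^sup>* u v" by (rule rtranclp_trans[OF _ rtc_sym_edge])
  then show ?thesis using comp_eq_iff uv by blast
qed

lemma assoc_eq: assumes FE: "F \<subseteq> E" shows "assoc_edges V E F = (\<lambda>e. comp V E F ` e) ` F"
proof (rule set_eqI)
  fix x
  show "x \<in> assoc_edges V E F \<longleftrightarrow> x \<in> (\<lambda>e. comp V E F ` e) ` F"
  proof
    assume "x \<in> assoc_edges V E F"
    then obtain u v where "x = {comp V E F u, comp V E F v}" "{u, v} \<in> F"
      unfolding assoc_edges_def by blast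
    then have "x = comp V E F ` {u, v}" by simp
    then show "x \<in> (\<lambda>e. comp V E F ` e) ` F" using \<open>{u, v} \<in> F\<close> by (rule image_eqI)
  next
    assume "x \<in> (\<lambda>e. comp V E F ` e) ` F"
    then obtain e where e: "e \<in> F" "x = comp V E F ` e" by blast
    have "e \<in> E" using e FE by blast
    then obtain u v where "e = {u, v}" using EV by blast
    then show "x \<in> assoc_edges V E F" unfolding assoc_edges_def using e by blast
  qed
qed

lemma fin_comps: "finite (components V E F)" unfolding components_def using finV by simp

lemma comp_in: "v \<in> V \<Longrightarrow> comp V E F v \<in> components V E F"
  by (simp add: components_def)

lemma edge_sub: assumes "e \<in> E" shows "e \<subseteq> V"
proof -
  obtain u v where "e = {u, v}" "u \<in> V" "v \<in> V" using EV assms by blast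
  then show ?thesis by simp
qed

lemma assoc_sub: assumes "F \<subseteq> E" shows "assoc_edges V E F \<subseteq> Pow (components V E F)"
  unfolding assoc_eq[OF assms]
proof
  fix x assume "x \<in> (\<lambda>e. comp V E F ` e) ` F"
  then obtain e where "e \<in> F" "x = comp V E F ` e" by blast
  then have "e \<subseteq> V" using assms edge_sub by blast
  then show "x \<in> Pow (components V E F)" using \<open>x = _\<close> comp_in by blast
qed

lemma fin_assoc: "F \<subseteq> E \<Longrightarrow> finite (assoc_edges V E F)"
  using assoc_sub fin_comps finite_Pow_iff finite_subset by metis

lemma cap_card: "assoc_cap (\<lambda>_. 1) C = card C" by (simp add: assoc_cap_def)

lemma step:
  assumes FE: "F \<subseteq> E" and eF: "e \<in> F"
    and D: "distributable (components V E F) (assoc_edges V E F) (assoc_cap (\<lambda>_. 1))"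
  shows "distributable (components V E (F - {e})) (assoc_edges V E (F - {e})) (assoc_cap (\<lambda>_. 1))"
proof -
  have eE: "e \<in> E" using eF FE by blast
  obtain a b where e: "e = {a, b}" and aV: "a \<in> V" and bV: "b \<in> V" using EV eE by blast
  let ?R = "(\<lambda>x y. {x, y} \<in> E - F)"
  let ?c = "comp V E F"
  let ?c1 = "comp V E (F - {e})"
  define A where "A = ?c a"
  define B where "B = ?c b"
  define g where "g = (\<lambda>D. if D = A \<or> D = B then A \<union> B else D)"
  have F1E: "F - {e} \<subseteq> E" using FE by blast
  have EF1: "E - (F - {e}) = (E - F) \<union> {{a, b}}" using eF FE unfolding e[symmetric] by blast
  have rt: "(\<lambda>x y. {x, y} \<in> E - (F - {e}))\<^sup>*\<^sup>* x y \<longleftrightarrow>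
     ?R\<^sup>*\<^sup>* x y \<or> (?R\<^sup>*\<^sup>* x a \<and> ?R\<^sup>*\<^sup>* b y) \<or> (?R\<^sup>*\<^sup>* x b \<and> ?R\<^sup>*\<^sup>* a y)" for x y
    unfolding EF1 by (rule rtc_add)
  have c1a: "?c1 a = A \<union> B"
  proof (rule set_eqI)
    fix w
    show "w \<in> ?c1 a \<longleftrightarrow> w \<in> A \<union> B"
      unfolding A_def B_def Un_iff comp_mem rt by (auto intro: rtc_sym_edge)
  qed
  have c1: "?c1 v = g (?c v)" if vV: "v \<in> V" for v
  proof -
    have ia: "?c v = A \<longleftrightarrow> ?R\<^sup>*\<^sup>* v a" unfolding A_def by (rule comp_eq_iff[OF vV aV])
    have ib: "?c v = B \<longleftrightarrow> ?R\<^sup>*\<^sup>* v b" unfolding B_def by (rule comp_eq_iff[OF vV bV])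
    show ?thesis
    proof (cases "?R\<^sup>*\<^sup>* v a \<or> ?R\<^sup>*\<^sup>* v b")
      case True
      then have "g (?c v) = A \<union> B" unfolding g_def using ia ib by auto
      moreover have "?c1 v = ?c1 a"
        using comp_eq_iff[OF vV aV, of "F - {e}"] True unfolding rt by auto
      ultimately show ?thesis using c1a by simp
    next
      case False
      then have "g (?c v) = ?c v" unfolding g_def using ia ib by auto
      moreover have "?c1 v = ?c v"
      proof (rule set_eqI)
        fix w show "w \<in> ?c1 v \<longleftrightarrow> w \<in> ?c v" unfolding comp_mem rt using False by blast
      qed
      ultimately show ?thesis by simp
    qed
  qed
  have comps1: "components V E (F - {e}) = g ` components V E F"
    unfolding components_def using c1 by (auto simp: image_comp)
  have assoc1: "assoc_edges V E (F - {e}) = (\<lambda>e'. g ` ?c ` e') ` (F - {e})"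
    unfolding assoc_eq[OF F1E]
  proof (rule image_cong[OF refl])
    fix e' assume "e' \<in> F - {e}"
    then have "e' \<subseteq> V" using F1E edge_sub by blast
    then show "?c1 ` e' = g ` ?c ` e'" using c1 by (auto simp: image_comp)
  qed
  have aA: "a \<in> A" unfolding A_def using comp_refl[OF aV] .
  have bB: "b \<in> B" unfolding B_def using comp_refl[OF bV] .
  have cls: "?c u = ?c w" if "u \<in> V" "w \<in> V" "?c w \<subseteq> ?c u" for u w
    using comp_disj[OF that(1,2)] comp_refl[OF that(2)] that(3) by blast
  have finF: "finite (assoc_edges V E F)" using fin_assoc[OF FE] .
  have cover: "{y \<in> assoc_edges V E (F - {e}). g D \<in> y}
      \<subseteq> image g ` {x \<in> assoc_edges V E F. \<exists>D0\<in>x. g D0 = g D}" for D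
  proof
    fix y assume "y \<in> {y \<in> assoc_edges V E (F - {e}). g D \<in> y}"
    then obtain e' where e': "e' \<in> F - {e}" "y = g ` ?c ` e'" "g D \<in> y" unfolding assoc1 by blast
    have "?c ` e' \<in> assoc_edges V E F" unfolding assoc_eq[OF FE] using e' by blast
    moreover have "\<exists>D0\<in>?c ` e'. g D0 = g D" using e' by auto
    ultimately show "y \<in> image g ` {x \<in> assoc_edges V E F. \<exists>D0\<in>x. g D0 = g D}" using e' by blast
  qed
  have cardle: "card {y \<in> assoc_edges V E (F - {e}). g D \<in> y} \<le> card S"
    if "{x \<in> assoc_edges V E F. \<exists>D0\<in>x. g D0 = g D} \<subseteq> S" "S \<subseteq> assoc_edges V E F" for D S
  proof -
    have fS: "finite S" using that(2) finF finite_subset by blast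
    have "card {y \<in> assoc_edges V E (F - {e}). g D \<in> y} \<le> card (image g ` S)"
    proof (rule card_mono)
      show "finite (image g ` S)" using fS by simp
      show "{y \<in> assoc_edges V E (F - {e}). g D \<in> y} \<subseteq> image g ` S"
        using cover[of D] image_mono[OF that(1), of "image g"] by (rule subset_trans)
    qed
    also have "\<dots> \<le> card S" using fS by (rule card_image_le)
    finally show ?thesis .
  qed
  have Dc: "int (card C) \<ge> int (deg (assoc_edges V E F) C) - 1" if "C \<in> components V E F" for C
    using D that unfolding distributable_def cap_card by blast
  show ?thesis unfolding distributable_def cap_card
  proof
    fix D' assume "D' \<in> components V E (F - {e})"
    then obtain v where vV: "v \<in> V" and D1: "D' = ?c1 v" unfolding components_def by blast
    have D': "D' = g (?c v)" using D1 c1[OF vV] by simp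
    define Dv where "Dv = ?c v"
    have Dvc: "Dv \<in> components V E F" unfolding Dv_def using comp_in[OF vV] .
    show "int (deg (assoc_edges V E (F - {e})) D') - 1 \<le> int (card D')"
    proof (cases "Dv = A \<or> Dv = B")
      case False
      then have gD: "g Dv = Dv" unfolding g_def by auto
      have "{x \<in> assoc_edges V E F. \<exists>D0\<in>x. g D0 = g Dv} \<subseteq> {x \<in> assoc_edges V E F. Dv \<in> x}"
      proof clarify
        fix x D0 assume x: "x \<in> assoc_edges V E F" "D0 \<in> x" "g D0 = g Dv"
        have "D0 \<in> components V E F" using x assoc_sub[OF FE] by blast
        then obtain u where uV: "u \<in> V" and D0: "D0 = ?c u" unfolding components_def by blast
        show "Dv \<in> x"
        proof (cases "D0 = A \<or> D0 = B")
          case True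
          then have "A \<union> B = Dv" using x(3) gD unfolding g_def by auto
          then have "?c a \<subseteq> ?c v" unfolding A_def Dv_def by blast
          then have "?c v = ?c a" using cls[OF vV aV] by blast
          then show ?thesis using False unfolding A_def Dv_def by blast
        next
          case False
          then show ?thesis using x gD unfolding g_def by auto
        qed
      qed
      then have "deg (assoc_edges V E (F - {e})) D' \<le> deg (assoc_edges V E F) Dv"
        unfolding deg_def D' Dv_def[symmetric] using cardle[of Dv] by (metis (no_types, lifting) mem_Collect_eq subsetI gD)
      then show ?thesis using Dc[OF Dvc] unfolding D' Dv_def[symmetric] gD by linarith
    next
      case True
      then have gD: "g Dv = A \<union> B" unfolding g_def by auto
      define XA where "XA = {x \<in> assoc_edges V E F. A \<in> x}"
      define XB where "XB = {x \<in> assoc_edges V E F. B \<in> x}"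
      have sub: "{x \<in> assoc_edges V E F. \<exists>D0\<in>x. g D0 = g Dv} \<subseteq> XA \<union> XB"
      proof clarify
        fix x D0 assume x: "x \<in> assoc_edges V E F" "D0 \<in> x" "g D0 = g Dv" "x \<notin> XB"
        have "D0 \<in> components V E F" using x assoc_sub[OF FE] by blast
        then obtain u where uV: "u \<in> V" and D0: "D0 = ?c u" unfolding components_def by blast
        have "D0 = A \<or> D0 = B"
        proof (rule ccontr)
          assume nn: "\<not> (D0 = A \<or> D0 = B)"
          then have "D0 = A \<union> B" using x(3) gD unfolding g_def by auto
          then have "?c a \<subseteq> ?c u" unfolding A_def D0 by blast
          then have "?c u = ?c a" using cls[OF uV aV] by blast
          then show False using nn unfolding A_def D0 by blast
        qed
        then show "x \<in> XA" using x unfolding XA_def XB_def by blast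
      qed
      have AC: "A \<in> components V E F" unfolding A_def using comp_in[OF aV] .
      have BC: "B \<in> components V E F" unfolding B_def using comp_in[OF bV] .
      have degle: "deg (assoc_edges V E (F - {e})) D' \<le> card (XA \<union> XB)"
      proof -
        have "XA \<union> XB \<subseteq> assoc_edges V E F" unfolding XA_def XB_def by blast
        then show ?thesis unfolding deg_def D' Dv_def[symmetric] using cardle[OF sub] by blast
      qed
      have fA: "finite XA" "finite XB" using finF unfolding XA_def XB_def by auto
      have dA: "deg (assoc_edges V E F) A = card XA" "deg (assoc_edges V E F) B = card XB"
        unfolding deg_def XA_def XB_def by simp_all
      have D'AB: "D' = A \<union> B" unfolding D' Dv_def[symmetric] gD ..
      show ?thesis
      proof (cases "A = B")
        case True
        then show ?thesis using degle Dc[OF AC] dA D'AB unfolding XB_def XA_def by simp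
      next
        case False
        have disj: "A \<inter> B = {}" using comp_disj[OF aV bV] False unfolding A_def B_def by blast
        have finAB: "finite A" "finite B" using comp_sub finV finite_subset unfolding A_def B_def by metis+
        have cAB: "card (A \<union> B) = card A + card B" using card_Un_disjoint[OF finAB disj] .
        have "?c ` e \<in> assoc_edges V E F" unfolding assoc_eq[OF FE] using eF by blast
        then have "{A, B} \<in> XA \<inter> XB" unfolding XA_def XB_def A_def B_def e by simp
        then have "card (XA \<inter> XB) \<ge> 1" using fA by (metis One_nat_def Suc_leI card_gt_0_iff emptyE finite_Int)
        moreover have "card (XA \<union> XB) + card (XA \<inter> XB) = card XA + card XB"
          using card_Un_Int[OF fA] by simp
        moreover have "card D' = card A + card B" using D'AB cAB by simp
        ultimately show ?thesis using degle Dc[OF AC] Dc[OF BC] dA by linarith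
      qed
    qed
  qed
qed

lemma finE: "finite E"
proof -
  have "E \<subseteq> Pow V" using edge_sub by blast
  then show ?thesis using finV by (meson finite_Pow_iff finite_subset)
qed

lemma multi:
  "\<forall>F. F \<subseteq> E \<longrightarrow> F' \<subseteq> F \<longrightarrow> card (F - F') = k
     \<longrightarrow> distributable (components V E F) (assoc_edges V E F) (assoc_cap (\<lambda>_. 1))
     \<longrightarrow> distributable (components V E F') (assoc_edges V E F') (assoc_cap (\<lambda>_. 1))"
proof (induction k)
  case 0
  show ?case
  proof (intro allI impI)
    fix F assume h: "F \<subseteq> E" "F' \<subseteq> F" "card (F - F') = 0"
      "distributable (components V E F) (assoc_edges V E F) (assoc_cap (\<lambda>_. 1))"
    have "finite (F - F')" using h(1) finE finite_subset by blast
    then have "F = F'" using h(2,3) by auto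
    then show "distributable (components V E F') (assoc_edges V E F') (assoc_cap (\<lambda>_. 1))" using h(4) by simp
  qed
next
  case (Suc k)
  show ?case
  proof (intro allI impI)
    fix F assume h: "F \<subseteq> E" "F' \<subseteq> F" "card (F - F') = Suc k"
      "distributable (components V E F) (assoc_edges V E F) (assoc_cap (\<lambda>_. 1))"
    have fin: "finite (F - F')" using h(1) finE finite_subset by blast
    obtain e where e: "e \<in> F - F'" using h(3) by (metis card.empty ex_in_conv nat.distinct(1))
    have "distributable (components V E (F - {e})) (assoc_edges V E (F - {e})) (assoc_cap (\<lambda>_. 1))"
      using step[OF h(1) _ h(4)] e by blast
    moreover have "card ((F - {e}) - F') = k"
    proof -
      have "(F - {e}) - F' = (F - F') - {e}" by blast
      then show ?thesis using h(3) e fin by simp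
    qed
    moreover have "F - {e} \<subseteq> E" "F' \<subseteq> F - {e}" using h e by blast+
    ultimately show "distributable (components V E F') (assoc_edges V E F') (assoc_cap (\<lambda>_. 1))"
      using Suc.IH by blast
  qed
qed

lemma merge:
  assumes dist: "distributable V E cap" and c12: "{c1, c2} \<in> E"
  shows "deg (assoc_edges V E (E - {{c1, c2}})) {c1, c2} \<le> assoc_cap cap {c1, c2}"
proof -
  let ?F = "E - {{c1, c2}}"
  let ?c = "comp V E ?F"
  obtain u v where uv: "{c1, c2} = {u, v}" "u \<in> V" "v \<in> V" using EV c12 by blast
  have c1V: "c1 \<in> V" and c2V: "c2 \<in> V" using uv by (auto simp: doubleton_eq_iff)
  have FE: "?F \<subseteq> E" by blast
  define X1 where "X1 = {e \<in> E. c1 \<in> e} - {{c1, c2}}"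
  define X2 where "X2 = {e \<in> E. c2 \<in> e} - {{c1, c2}}"
  have fX: "finite X1" "finite X2" unfolding X1_def X2_def using finE by auto
  have cX1: "card X1 = deg E c1 - 1" unfolding X1_def deg_def using c12 finE by (simp add: card_Diff_singleton)
  have cX2: "card X2 = deg E c2 - 1" unfolding X2_def deg_def using c12 finE by (simp add: card_Diff_singleton)
  have sub: "{y \<in> assoc_edges V E ?F. {c1, c2} \<in> y} \<subseteq> (\<lambda>e. ?c ` e) ` (X1 \<union> X2)"
  proof
    fix y assume "y \<in> {y \<in> assoc_edges V E ?F. {c1, c2} \<in> y}"
    then obtain e where e: "e \<in> ?F" "y = ?c ` e" "{c1, c2} \<in> y" unfolding assoc_eq[OF FE] by blast
    then obtain w where w: "w \<in> e" "{c1, c2} = ?c w" by blast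
    have "w \<in> V" using w(1) e(1) edge_sub by blast
    then have "w \<in> {c1, c2}" using comp_refl w(2) by metis
    then have "e \<in> X1 \<union> X2" using e(1) w(1) unfolding X1_def X2_def by blast
    then show "y \<in> (\<lambda>e. ?c ` e) ` (X1 \<union> X2)" using e(2) by blast
  qed
  have "deg (assoc_edges V E ?F) {c1, c2} \<le> card ((\<lambda>e. ?c ` e) ` (X1 \<union> X2))"
    unfolding deg_def using sub fX by (intro card_mono) auto
  also have "\<dots> \<le> card (X1 \<union> X2)" by (rule card_image_le) (use fX in auto)
  finally have dle: "deg (assoc_edges V E ?F) {c1, c2} \<le> card (X1 \<union> X2)" .
  have d1: "int (cap c1) \<ge> int (deg E c1) - 1" using dist c1V unfolding distributable_def by blast
  have d2: "int (cap c2) \<ge> int (deg E c2) - 1" using dist c2V unfolding distributable_def by blast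
  show ?thesis
  proof (cases "c1 = c2")
    case True
    then have "X1 \<union> X2 = X1" unfolding X1_def X2_def by simp
    then show ?thesis using dle cX1 d1 True unfolding assoc_cap_def by simp
  next
    case False
    have "card (X1 \<union> X2) \<le> card X1 + card X2" by (rule card_Un_le)
    then show ?thesis using dle cX1 cX2 d1 d2 False unfolding assoc_cap_def by simp
  qed
qed

end
lemma tree_TV: "is_tree V E \<Longrightarrow> TV V E"
  unfolding is_tree_def TV_def by blast

theorem mainTheorem6:
  shows "(\<forall>(n::nat) E. is_tree {1..n} E \<longrightarrow>
            (\<forall>\<sigma> \<tau>. is_face n E \<tau> \<and> is_face n E \<sigma> \<and> face_le n E \<sigma> \<tau> \<and> face_distributable n E \<tau>
                \<longrightarrow> face_distributable n E \<sigma>))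
       \<and> (\<forall>(V::'a set) E (cap::'a \<Rightarrow> nat) c1 c2.
            is_tree V E \<and> distributable V E cap \<and> {c1, c2} \<in> E
            \<longrightarrow> deg (assoc_edges V E (E - {{c1, c2}})) {c1, c2} \<le> assoc_cap cap {c1, c2})"
proof (intro conjI allI impI)
  fix n :: nat and E \<sigma> \<tau>
  assume T: "is_tree {1..n} E"
    and h: "is_face n E \<tau> \<and> is_face n E \<sigma> \<and> face_le n E \<sigma> \<tau> \<and> face_distributable n E \<tau>"
  interpret TV "{1..n}" E using tree_TV[OF T] .
  obtain F lab where t: "\<tau> = (F, lab)" by fastforce
  obtain F' lab' where s: "\<sigma> = (F', lab')" by fastforce
  have FE: "F \<subseteq> E" using h unfolding t is_face_def by simp
  have FF: "F' \<subseteq> F" using h unfolding t s face_le_def by simp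
  have D: "distributable (components {1..n} E F) (assoc_edges {1..n} E F) (assoc_cap (\<lambda>_. 1))"
    using h unfolding t face_distributable_def by simp
  have "distributable (components {1..n} E F') (assoc_edges {1..n} E F') (assoc_cap (\<lambda>_. 1))"
    using multi FE FF D by blast
  then show "face_distributable n E \<sigma>" unfolding s face_distributable_def by simp
next
  fix V :: "'a set" and E cap c1 c2
  assume h: "is_tree V E \<and> distributable V E cap \<and> {c1, c2} \<in> E"
  interpret TV V E using tree_TV h by blast
  show "deg (assoc_edges V E (E - {{c1, c2}})) {c1, c2} \<le> assoc_cap cap {c1, c2}"
    using merge h by blast
qed

end
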